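(* Let $N$ be a natural number, $P=\{a\subseteq N: |a|\geq 2\}$, and let $\|\cdot\|_3$ be the graph coloring norm on subsets of $P$ (defined in the context). Let $g:P\to P$ be a polygon-reducing function and let $\psi_g$ be as defined in the context. Then for every $A\subseteq P$, $\|A\|_3\leq \|\psi_g(A)\|_3$.
   Context: $N=\{0,\ldots,N-1\}$. For $A\subseteq P$ and $z\subseteq N$ let $A\restriction z=\{a\in A: a\subseteq z\}$. The relation "$\|A\|_3\geq m$" is defined recursively: $\|A\|_3\geq 0$ always; $\|A\|_3\geq 1$ iff $A\neq\emptyset$; for $m\geq 1$, $\|A\|_3\geq m+1$ iff for every $z\subseteq N$ either $\|A\restriction z\|_3\geq m$ or $\|A\restriction(N\setminus z)\|_3\geq m$. Then $\|A\|_3$ is the largest $m$ with $\|A\|_3\geq m$. Define $f:\mathcal P(N)\to\omega$ by $f(a)=a_0N^0+a_1N^1+\cdots+a_kN^k$ where $a=\{a_0<a_1<\cdots<a_k\}$. A function $g:P\to P$ is polygon-reducing if $g(a)\subseteq a$ for all $a\in P$, and $g(a)=a$ iff $|a|=2$. For such $g$, $\psi_g:\mathcal P(P)\to\mathcal P(P)$ is given by $\psi_g(\emptyset)=\emptyset$ and, for non-empty $A\subseteq P$, $\psi_g(A)=(A\setminus\{a\})\cup\{g(a)\}$ where $a\in A$ satisfies $f(a)=\max\{f(a'):a'\in A\}$. *)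

theory Defs
  imports Main
begin

text \<open>The ground set N = {0,...,N-1} is represented as {..<N}.\<close>

definition polys :: "nat \<Rightarrow> nat set set" where
  "polys N = {a. a \<subseteq> {..<N} \<and> card a \<ge> 2}"

definition restr :: "nat set set \<Rightarrow> nat set \<Rightarrow> nat set set" where
  "restr A z = {a \<in> A. a \<subseteq> z}"

text \<open>norm_ge N A m  means  ||A||_3 >= m.\<close>
fun norm_ge :: "nat \<Rightarrow> nat set set \<Rightarrow> nat \<Rightarrow> bool" where
  "norm_ge N A 0 = True"
| "norm_ge N A (Suc 0) = (A \<noteq> {})"
| "norm_ge N A (Suc (Suc m)) =
     (\<forall>z. z \<subseteq> {..<N} \<longrightarrow>
        norm_ge N (restr A z) (Suc m) \<or> norm_ge N (restr A ({..<N} - z)) (Suc m))"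

definition norm3 :: "nat \<Rightarrow> nat set set \<Rightarrow> nat" where
  "norm3 N A = (GREATEST m. norm_ge N A m)"

definition fcode :: "nat \<Rightarrow> nat set \<Rightarrow> nat" where
  "fcode N a = (\<Sum>i<card a. sorted_list_of_set a ! i * N ^ i)"

definition polygon_reducing :: "nat \<Rightarrow> (nat set \<Rightarrow> nat set) \<Rightarrow> bool" where
  "polygon_reducing N g \<longleftrightarrow>
     (\<forall>a \<in> polys N. g a \<in> polys N \<and> g a \<subseteq> a \<and> (g a = a \<longleftrightarrow> card a = 2))"

definition psi :: "nat \<Rightarrow> (nat set \<Rightarrow> nat set) \<Rightarrow> nat set set \<Rightarrow> nat set set" where
  "psi N g A = (if A = {} then {} else
     (let a = (SOME a. a \<in> A \<and> fcode N a = Max (fcode N ` A)) in (A - {a}) \<union> {g a}))"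

end

theory Submission
  imports Defs
begin

lemma restr_empty: "restr {} z = {}" by (simp add: restr_def)

lemma norm_ge_empty: "\<not> norm_ge N {} (Suc j)"
  by (induction j) (auto simp: restr_empty)

lemma norm_ge_mono:
  "\<forall>A B. (\<forall>a\<in>A. \<exists>b\<in>B. b \<subseteq> a) \<longrightarrow> norm_ge N A m \<longrightarrow> norm_ge N B m"
proof (induction m rule: nat_less_induct)
  case (1 m)
  show ?case
  proof (intro allI impI)
    fix A B assume sub: "\<forall>a\<in>A. \<exists>b\<in>B. b \<subseteq> a" and ng: "norm_ge N A m"
    show "norm_ge N B m"
    proof (cases m)
      case 0 then show ?thesis by simp
    next
      case (Suc k)
      show ?thesis
      proof (cases k)
        case 0
        then have "A \<noteq> {}" using Suc ng by simp
        then have "B \<noteq> {}" using sub by blast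
        then show ?thesis using Suc 0 by simp
      next
        case (Suc j)
        have r: "\<forall>a\<in>restr A z. \<exists>b\<in>restr B z. b \<subseteq> a" for z
        proof
          fix a assume "a \<in> restr A z"
          then have a: "a \<in> A" "a \<subseteq> z" by (auto simp: restr_def)
          then obtain b where b: "b \<in> B" "b \<subseteq> a" using sub by blast
          then have "b \<in> restr B z" using a by (auto simp: restr_def)
          then show "\<exists>b\<in>restr B z. b \<subseteq> a" using b by blast
        qed
        have IH: "norm_ge N (restr A z) (Suc j) \<Longrightarrow> norm_ge N (restr B z) (Suc j)" for z
        proof -
          have lt: "Suc j < m" using \<open>m = Suc k\<close> Suc by simp
          show "norm_ge N (restr A z) (Suc j) \<Longrightarrow> norm_ge N (restr B z) (Suc j)"
            using 1[rule_format, OF lt, of "restr A z" "restr B z"] r[of z] by blast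
        qed
        have ng2: "norm_ge N A (Suc (Suc j))" using ng \<open>m = Suc k\<close> Suc by simp
        have "norm_ge N B (Suc (Suc j))"
          unfolding norm_ge.simps(3)
        proof (intro allI impI)
          fix z :: "nat set" assume "z \<subseteq> {..<N}"
          then have "norm_ge N (restr A z) (Suc j) \<or> norm_ge N (restr A ({..<N} - z)) (Suc j)"
            using ng2 by (simp only: norm_ge.simps(3))
          then show "norm_ge N (restr B z) (Suc j) \<or> norm_ge N (restr B ({..<N} - z)) (Suc j)"
            using IH by blast
        qed
        then show ?thesis using \<open>m = Suc k\<close> Suc by simp
      qed
    qed
  qed
qed

lemma norm_ge_bound:
  "\<forall>A S. finite S \<and> card S = k \<and> S \<subseteq> {..<N} \<and> (\<forall>a\<in>A. card a \<ge> 2 \<and> a \<subseteq> S)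
     \<longrightarrow> \<not> norm_ge N A (Suc k + j)"
proof (induction k arbitrary: j)
  case 0
  show ?case
  proof (intro allI impI)
    fix A and S :: "nat set"
    assume h: "finite S \<and> card S = 0 \<and> S \<subseteq> {..<N} \<and> (\<forall>a\<in>A. card a \<ge> 2 \<and> a \<subseteq> S)"
    then have "S = {}" by auto
    then have "A = {}" using h by fastforce
    then show "\<not> norm_ge N A (Suc 0 + j)" using norm_ge_empty by simp
  qed
next
  case (Suc k)
  show ?case
  proof (intro allI impI)
    fix A and S :: "nat set"
    assume h: "finite S \<and> card S = Suc k \<and> S \<subseteq> {..<N} \<and> (\<forall>a\<in>A. card a \<ge> 2 \<and> a \<subseteq> S)"
    then obtain x where x: "x \<in> S" by (metis card.empty ex_in_conv nat.simps(3))
    let ?S = "S - {x}"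
    have fS: "finite ?S \<and> card ?S = k \<and> ?S \<subseteq> {..<N}" using h x by auto
    have A1: "\<forall>a\<in>restr A {x}. card a \<ge> 2 \<and> a \<subseteq> ?S"
    proof
      fix a assume "a \<in> restr A {x}"
      then have "a \<subseteq> {x}" "card a \<ge> 2" using h by (auto simp: restr_def)
      then have False using card_mono[of "{x}" a] by simp
      then show "card a \<ge> 2 \<and> a \<subseteq> ?S" ..
    qed
    have A2: "\<forall>a\<in>restr A ({..<N} - {x}). card a \<ge> 2 \<and> a \<subseteq> ?S"
      using h by (auto simp: restr_def)
    have n1: "\<not> norm_ge N (restr A {x}) (Suc k + j)" using Suc.IH[of j, rule_format, of ?S "restr A {x}"] fS A1 by blast
    have n2: "\<not> norm_ge N (restr A ({..<N} - {x})) (Suc k + j)" using Suc.IH[of j, rule_format, of ?S "restr A ({..<N} - {x})"] fS A2 by blast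
    have xs: "{x} \<subseteq> {..<N}" using h x by auto
    show "\<not> norm_ge N A (Suc (Suc k) + j)"
    proof
      assume "norm_ge N A (Suc (Suc k) + j)"
      then have "norm_ge N A (Suc (Suc (k + j)))" by simp
      then have "norm_ge N (restr A {x}) (Suc (k + j)) \<or> norm_ge N (restr A ({..<N} - {x})) (Suc (k + j))"
        using xs by (simp only: norm_ge.simps(3))
      then show False using n1 n2 by simp
    qed
  qed
qed

lemma norm_ge_le:
  assumes "A \<subseteq> polys N" "norm_ge N A m" shows "m \<le> N"
proof (rule ccontr)
  assume "\<not> m \<le> N"
  then obtain j where "m = Suc N + j" by (metis add_Suc less_imp_Suc_add not_le)
  moreover have "\<not> norm_ge N A (Suc N + j)"
    using norm_ge_bound[of N N j, rule_format, of "{..<N}" A] assms(1) by (auto simp: polys_def)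
  ultimately show False using assms(2) by simp
qed

lemma norm3_props:
  assumes "A \<subseteq> polys N"
  shows "norm_ge N A (norm3 N A)" "norm_ge N A m \<Longrightarrow> m \<le> norm3 N A"
  unfolding norm3_def
   apply (rule GreatestI_nat[of _ 0 N]) using norm_ge_le[OF assms] apply auto[2]
  apply (rule Greatest_le_nat[of _ m N]) using norm_ge_le[OF assms] by auto

theorem theorem5p22:
  fixes N :: nat and g :: "nat set \<Rightarrow> nat set" and A :: "nat set set"
  assumes "polygon_reducing N g"
    and "A \<subseteq> polys N"
  shows "norm3 N A \<le> norm3 N (psi N g A)"
proof (cases "A = {}")
  case True then show ?thesis by (simp add: psi_def)
next
  case False
  define a where "a = (SOME a. a \<in> A \<and> fcode N a = Max (fcode N ` A))"
  have ps: "psi N g A = (A - {a}) \<union> {g a}" unfolding psi_def Let_def a_def[symmetric] using False by (simp only: if_False)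
  have sub: "\<forall>x\<in>A. \<exists>b\<in>psi N g A. b \<subseteq> x"
  proof
    fix x assume x: "x \<in> A"
    show "\<exists>b\<in>psi N g A. b \<subseteq> x"
    proof (cases "x = a")
      case True
      then have "g x \<subseteq> x" using assms x unfolding polygon_reducing_def by blast
      then show ?thesis using True ps by auto
    qed (use x ps in auto)
  qed
  have P: "psi N g A \<subseteq> polys N"
  proof -
    have "a \<in> A \<Longrightarrow> g a \<in> polys N" using assms unfolding polygon_reducing_def by blast
    moreover have "a \<notin> A \<Longrightarrow> g a \<in> polys N"
    proof -
      assume "a \<notin> A"
      have "\<exists>a. a \<in> A \<and> fcode N a = Max (fcode N ` A)"
      proof -
        have fin: "finite A" using assms(2) finite_subset[of A "Pow {..<N}"] by (auto simp: polys_def)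
        then have "Max (fcode N ` A) \<in> fcode N ` A" using False by simp
        then show ?thesis by auto
      qed
      then have "a \<in> A" unfolding a_def by (rule someI_ex[THEN conjunct1])
      then show ?thesis using \<open>a \<notin> A\<close> by simp
    qed
    ultimately show ?thesis using ps assms(2) by blast
  qed
  have "norm_ge N (psi N g A) (norm3 N A)"
    using norm_ge_mono[of N "norm3 N A", rule_format, OF sub[rule_format] norm3_props(1)[OF assms(2)]] .
  then show ?thesis using norm3_props(2)[OF P] by blast
qed

end
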